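(* Let $M=B\circ S$, $x,x'\in\mathbb X$, and let $A_1,\dots,A_I$ and $E_1,\dots,E_J$ be partitions of $\mathbb Y$ with $\Pr[S(x)\in A_i]>0$, $\Pr[S(x')\in E_j]>0$ for all $i,j$. Write $s_1,\dots,s_{I+J}$ for the conditional pmfs $s_x(\cdot\mid A_1),\dots,s_x(\cdot\mid A_I),s_{x'}(\cdot\mid E_1),\dots,s_{x'}(\cdot\mid E_J)$ and let $\mathbb G$ be the set of all couplings between them. If $\gamma^*\in\mathbb G$ is $d_{\mathbb Y}$-compatible, then for every $\alpha$ (with $\alpha>1$), $$\gamma^*\in\arg\min_{\gamma\in\mathbb G}\sum_{(\mathbf y^{(1)},\mathbf y^{(2)})\in\mathbb Y^{I+J}}\hat c_\alpha(\mathbf y^{(1)},\mathbf y^{(2)})\,\gamma(\mathbf y^{(1)},\mathbf y^{(2)}),$$ where $\hat c_\alpha$ is the cost upper bound defined in the context.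
   Context: Setting: finite $\mathbb A$, $\mathbb X\subseteq\mathcal P(\mathbb A)$, finite batch space $\mathbb Y$ with a symmetric neighboring relation $\simeq_{\mathbb Y}$ and induced distance $d_{\mathbb Y}$ (length of the shortest chain of neighbors; $0$ from $y$ to itself). $S$ assigns to each dataset $x$ a pmf $s_x$ on $\mathbb Y$, $B$ assigns to each batch $y$ a density $b_y$ on $\mathbb R^D$, $m_x=\sum_y b_y s_x(y)$. $H_\alpha(p\|q)=\int\max\{p-\alpha q,0\}$, $\Lambda_\alpha(p\|q)=\int p^\alpha q^{1-\alpha}$; $\Psi_\alpha$ is either. Cost: $c_\alpha(\mathbf y^{(1)},\mathbf y^{(2)})=\Psi_\alpha(\sum_i b_{y^{(1)}_i}\Pr[S(x)\in A_i]\|\sum_j b_{y^{(2)}_j}\Pr[S(x')\in E_j])$ and $\hat c_\alpha(\mathbf y^{(1)},\mathbf y^{(2)})$ is the maximum of $c_\alpha(\hat{\mathbf y}^{(1)},\hat{\mathbf y}^{(2)})$ over $\hat{\mathbf y}^{(1)}\in\mathbb Y^I,\hat{\mathbf y}^{(2)}\in\mathbb Y^J$ with $d_{\mathbb Y}(\hat y^{(k)}_t,\hat y^{(l)}_u)\le d_{\mathbb Y}(y^{(k)}_t,y^{(l)}_u)$ for all $k,l,t,u$. For a pmf $p$, $\mathrm{supp}(p)=\{y:p(y)>0\}$; $d_{\mathbb Y}(y,\mathrm{supp}(p))=\min_{y'\in\mathrm{supp}(p)}d_{\mathbb Y}(y,y')$ and $d_{\mathbb Y}(\mathrm{supp}(p_1),\mathrm{supp}(p_2))=\min_{y_1\in\mathrm{supp}(p_1),y_2\in\mathrm{supp}(p_2)}d_{\mathbb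 Y}(y_1,y_2)$. A coupling $\gamma$ of pmfs $p_1,\dots,p_N$ (indexing the tuple as $\mathbf y=(y_1,\dots,y_N)$) is $d_{\mathbb Y}$-compatible if $\gamma(\mathbf y)>0$ implies both $d_{\mathbb Y}(y_1,y_u)=d_{\mathbb Y}(y_1,\mathrm{supp}(p_u))$ for all $u>1$ and $d_{\mathbb Y}(y_t,y_u)=d_{\mathbb Y}(\mathrm{supp}(p_t),\mathrm{supp}(p_u))$ for all $u>t>1$. *)

theory Defs
  imports "HOL-Probability.Probability"
begin

(* d_Y: length of the shortest chain of neighbours; \<infinity> if unreachable, 0 from y to itself *)
definition ydist :: "('y \<Rightarrow> 'y \<Rightarrow> bool) \<Rightarrow> 'y \<Rightarrow> 'y \<Rightarrow> enat" where
  "ydist nb y y' = (INF n \<in> {n. (y, y') \<in> {(a, b). nb a b} ^^ n}. enat n)"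

definition ydist_set :: "('y \<Rightarrow> 'y \<Rightarrow> bool) \<Rightarrow> 'y \<Rightarrow> 'y set \<Rightarrow> enat" where
  "ydist_set nb y P = Min ((\<lambda>y'. ydist nb y y') ` P)"

definition ydist_sets :: "('y \<Rightarrow> 'y \<Rightarrow> bool) \<Rightarrow> 'y set \<Rightarrow> 'y set \<Rightarrow> enat" where
  "ydist_sets nb P Q = Min ((\<lambda>(a, b). ydist nb a b) ` (P \<times> Q))"

definition H_div :: "real \<Rightarrow> ('d::euclidean_space \<Rightarrow> real) \<Rightarrow> ('d \<Rightarrow> real) \<Rightarrow> ennreal" where
  "H_div \<alpha> p q = (\<integral>\<^sup>+ z. ennreal (max (p z - \<alpha> * q z) 0) \<partial>lborel)"

(* Lambda_alpha(p||q) = \<integral> p^alpha q^(1-alpha), with the usual conventions 0/0 = 0, a/0 = \<infinity> *)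
definition L_div :: "real \<Rightarrow> ('d::euclidean_space \<Rightarrow> real) \<Rightarrow> ('d \<Rightarrow> real) \<Rightarrow> ennreal" where
  "L_div \<alpha> p q = (\<integral>\<^sup>+ z. (if q z = 0 then (if p z = 0 then 0 else \<infinity>)
                              else ennreal (p z powr \<alpha> * q z powr (1 - \<alpha>))) \<partial>lborel)"

definition is_coupling :: "'y pmf list \<Rightarrow> 'y list pmf \<Rightarrow> bool" where
  "is_coupling ps \<gamma> \<longleftrightarrow> (\<forall>ys \<in> set_pmf \<gamma>. length ys = length ps) \<and>
      (\<forall>k < length ps. map_pmf (\<lambda>ys. ys ! k) \<gamma> = ps ! k)"

(* d_Y-compatibility; index 0 here is index 1 of the paper *)
definition dY_compatible :: "('y \<Rightarrow> 'y \<Rightarrow> bool) \<Rightarrow> 'y pmf list \<Rightarrow> 'y list pmf \<Rightarrow> bool" where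
  "dY_compatible nb ps \<gamma> \<longleftrightarrow> (\<forall>ys \<in> set_pmf \<gamma>.
      (\<forall>u. 0 < u \<and> u < length ps \<longrightarrow> ydist nb (ys ! 0) (ys ! u) = ydist_set nb (ys ! 0) (set_pmf (ps ! u))) \<and>
      (\<forall>t u. 0 < t \<and> t < u \<and> u < length ps \<longrightarrow>
          ydist nb (ys ! t) (ys ! u) = ydist_sets nb (set_pmf (ps ! t)) (set_pmf (ps ! u))))"

(* c_alpha(y1, y2) with weights w1 i = Pr[S(x) \<in> A_i], w2 j = Pr[S(x') \<in> E_j];
   Psi already has alpha built in *)
definition cost :: "(('d \<Rightarrow> real) \<Rightarrow> ('d \<Rightarrow> real) \<Rightarrow> ennreal) \<Rightarrow> ('y \<Rightarrow> 'd \<Rightarrow> real) \<Rightarrow>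
    (nat \<Rightarrow> real) \<Rightarrow> (nat \<Rightarrow> real) \<Rightarrow> 'y list \<Rightarrow> 'y list \<Rightarrow> ennreal" where
  "cost Psi b w1 w2 y1 y2 =
     Psi (\<lambda>z. \<Sum>i < length y1. b (y1 ! i) z * w1 i) (\<lambda>z. \<Sum>j < length y2. b (y2 ! j) z * w2 j)"

(* \<hat>c_alpha on a concatenated tuple ys = y1 @ y2 with length y1 = I, length y2 = J *)
definition cost_hat :: "(('d \<Rightarrow> real) \<Rightarrow> ('d \<Rightarrow> real) \<Rightarrow> ennreal) \<Rightarrow> ('y \<Rightarrow> 'd \<Rightarrow> real) \<Rightarrow>
    ('y \<Rightarrow> 'y \<Rightarrow> bool) \<Rightarrow> nat \<Rightarrow> nat \<Rightarrow> (nat \<Rightarrow> real) \<Rightarrow> (nat \<Rightarrow> real) \<Rightarrow> 'y list \<Rightarrow> ennreal" where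
  "cost_hat Psi b nb I J w1 w2 ys =
     Max {cost Psi b w1 w2 (take I yh) (drop I yh) | yh.
            length yh = I + J \<and>
            (\<forall>k < I + J. \<forall>l < I + J. ydist nb (yh ! k) (yh ! l) \<le> ydist nb (ys ! k) (ys ! l))}"

end

theory Submission
  imports Defs
begin

lemma relpow_sym:
  assumes "\<forall>y y'. nb y y' \<longrightarrow> nb y' y"
  shows "(a, c) \<in> {(a, b). nb a b} ^^ n \<Longrightarrow> (c, a) \<in> {(a, b). nb a b} ^^ n"
proof (induction n arbitrary: a c)
  case 0 then show ?case by simp
next
  case (Suc n)
  from Suc.prems obtain d where d1: "(a, d) \<in> {(a, b). nb a b} ^^ n" and d2: "nb d c" by auto
  have e1: "(d, a) \<in> {(a, b). nb a b} ^^ n" by (rule Suc.IH[OF d1])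
  have e2: "(c, d) \<in> {(a, b). nb a b}" using assms d2 by simp
  show ?case by (rule relpow_Suc_I2[OF e2 e1])
qed

lemma ydist_sym:
  assumes "\<forall>y y'. nb y y' \<longrightarrow> nb y' y"
  shows "ydist nb y y' = ydist nb y' y"
proof -
  have "{n. (y, y') \<in> {(a, b). nb a b} ^^ n} = {n. (y', y) \<in> {(a, b). nb a b} ^^ n}"
    using relpow_sym[OF assms] by blast
  then show ?thesis unfolding ydist_def by simp
qed

lemma ydist_refl: "ydist nb y y = 0"
proof -
  have "ydist nb y y \<le> enat 0" unfolding ydist_def by (rule INF_lower) simp
  then have "ydist nb y y \<le> 0" by (simp add: zero_enat_def)
  then show ?thesis by simp
qed

lemma finite_len: "finite {ys :: 'y::finite list. length ys = n}"
  using finite_lists_length_eq[of "UNIV :: 'y set" n] by simp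

lemma cost_hat_mono:
  fixes zs ys :: "'y::finite list"
  assumes "length zs = I + J"
    and "\<forall>k < I + J. \<forall>l < I + J. ydist nb (zs ! k) (zs ! l) \<le> ydist nb (ys ! k) (ys ! l)"
  shows "cost_hat Psi b nb I J w1 w2 zs \<le> cost_hat Psi b nb I J w1 w2 ys"
  unfolding cost_hat_def
proof (rule Max_mono)
  show "{cost Psi b w1 w2 (take I yh) (drop I yh) |yh. length yh = I + J \<and>
          (\<forall>k<I + J. \<forall>l<I + J. ydist nb (yh ! k) (yh ! l) \<le> ydist nb (zs ! k) (zs ! l))}
      \<subseteq> {cost Psi b w1 w2 (take I yh) (drop I yh) |yh. length yh = I + J \<and>
          (\<forall>k<I + J. \<forall>l<I + J. ydist nb (yh ! k) (yh ! l) \<le> ydist nb (ys ! k) (ys ! l))}"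
  proof (rule subsetI)
    fix c assume "c \<in> {cost Psi b w1 w2 (take I yh) (drop I yh) |yh. length yh = I + J \<and>
          (\<forall>k<I + J. \<forall>l<I + J. ydist nb (yh ! k) (yh ! l) \<le> ydist nb (zs ! k) (zs ! l))}"
    then obtain yh where c: "c = cost Psi b w1 w2 (take I yh) (drop I yh)" and len: "length yh = I + J"
      and d: "\<forall>k<I + J. \<forall>l<I + J. ydist nb (yh ! k) (yh ! l) \<le> ydist nb (zs ! k) (zs ! l)" by blast
    have "\<forall>k<I + J. \<forall>l<I + J. ydist nb (yh ! k) (yh ! l) \<le> ydist nb (ys ! k) (ys ! l)"
    proof (intro allI impI)
      fix k l assume kl: "k < I + J" "l < I + J"
      have "ydist nb (yh ! k) (yh ! l) \<le> ydist nb (zs ! k) (zs ! l)" using d kl by blast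
      also have "\<dots> \<le> ydist nb (ys ! k) (ys ! l)" using assms(2) kl by blast
      finally show "ydist nb (yh ! k) (yh ! l) \<le> ydist nb (ys ! k) (ys ! l)" .
    qed
    then show "c \<in> {cost Psi b w1 w2 (take I yh) (drop I yh) |yh. length yh = I + J \<and>
          (\<forall>k<I + J. \<forall>l<I + J. ydist nb (yh ! k) (yh ! l) \<le> ydist nb (ys ! k) (ys ! l))}"
      using c len by blast
  qed
  show "{cost Psi b w1 w2 (take I yh) (drop I yh) |yh. length yh = I + J \<and>
          (\<forall>k<I + J. \<forall>l<I + J. ydist nb (yh ! k) (yh ! l) \<le> ydist nb (zs ! k) (zs ! l))} \<noteq> {}"
    using assms(1) by blast
  have "{cost Psi b w1 w2 (take I yh) (drop I yh) |yh. length yh = I + J \<and>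
          (\<forall>k<I + J. \<forall>l<I + J. ydist nb (yh ! k) (yh ! l) \<le> ydist nb (ys ! k) (ys ! l))}
      \<subseteq> (\<lambda>yh. cost Psi b w1 w2 (take I yh) (drop I yh)) ` {yh. length yh = I + J}" by blast
  then show "finite {cost Psi b w1 w2 (take I yh) (drop I yh) |yh. length yh = I + J \<and>
          (\<forall>k<I + J. \<forall>l<I + J. ydist nb (yh ! k) (yh ! l) \<le> ydist nb (ys ! k) (ys ! l))}"
    using finite_len by (rule finite_subset[OF _ finite_imageI])
qed

lemma key_dist:
  fixes nb :: "'y::finite \<Rightarrow> 'y \<Rightarrow> bool"
  assumes sym: "\<forall>y y'. nb y y' \<longrightarrow> nb y' y"
    and comp: "dY_compatible nb ps \<gamma>s"
    and z: "z \<in> set_pmf \<gamma>s"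
    and ys: "\<forall>k < length ps. ys ! k \<in> set_pmf (ps ! k)"
    and z0: "z ! 0 = ys ! 0"
    and k: "k < length ps" and l: "l < length ps"
  shows "ydist nb (z ! k) (z ! l) \<le> ydist nb (ys ! k) (ys ! l)"
proof -
  have c1: "\<And>u. 0 < u \<Longrightarrow> u < length ps \<Longrightarrow> ydist nb (z ! 0) (z ! u) \<le> ydist nb (ys ! 0) (ys ! u)"
  proof -
    fix u assume u: "0 < u" "u < length ps"
    have "ydist nb (z ! 0) (z ! u) = ydist_set nb (ys ! 0) (set_pmf (ps ! u))"
      using comp z u z0 unfolding dY_compatible_def by auto
    also have "\<dots> \<le> ydist nb (ys ! 0) (ys ! u)"
      unfolding ydist_set_def using ys u by (intro Min_le) auto
    finally show "ydist nb (z ! 0) (z ! u) \<le> ydist nb (ys ! 0) (ys ! u)" .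
  qed
  have c2: "\<And>t u. 0 < t \<Longrightarrow> t < u \<Longrightarrow> u < length ps \<Longrightarrow> ydist nb (z ! t) (z ! u) \<le> ydist nb (ys ! t) (ys ! u)"
  proof -
    fix t u assume u: "0 < t" "t < u" "u < length ps"
    have "ydist nb (z ! t) (z ! u) = ydist_sets nb (set_pmf (ps ! t)) (set_pmf (ps ! u))"
      using comp z u unfolding dY_compatible_def by auto
    also have "\<dots> \<le> ydist nb (ys ! t) (ys ! u)"
      unfolding ydist_sets_def using ys u
      by (intro Min_le) (auto intro!: image_eqI[where x="(ys ! t, ys ! u)"])
    finally show "ydist nb (z ! t) (z ! u) \<le> ydist nb (ys ! t) (ys ! u)" .
  qed
  have lt: "ydist nb (z ! k) (z ! l) \<le> ydist nb (ys ! k) (ys ! l)" if "k < l" "l < length ps" for k l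
  proof (cases "k = 0")
    case True then show ?thesis using c1 that z0 by simp
  next
    case False then show ?thesis using c2 that by simp
  qed
  consider "k = l" | "k < l" | "l < k" by linarith
  then show ?thesis
  proof cases
    case 1 then show ?thesis by (simp add: ydist_refl)
  next
    case 2 then show ?thesis using lt l by simp
  next
    case 3
    have "ydist nb (z ! k) (z ! l) = ydist nb (z ! l) (z ! k)" by (rule ydist_sym[OF sym])
    also have "\<dots> \<le> ydist nb (ys ! l) (ys ! k)" using lt 3 k by simp
    also have "\<dots> = ydist nb (ys ! k) (ys ! l)" by (rule ydist_sym[OF sym])
    finally show ?thesis .
  qed
qed

theorem mainTheorem4:
  fixes nb :: "'y::finite \<Rightarrow> 'y \<Rightarrow> bool"
    and X :: "'a::finite set set"
    and S :: "'a set \<Rightarrow> 'y pmf"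
    and b :: "'y \<Rightarrow> 'd::euclidean_space \<Rightarrow> real"
    and x x' :: "'a set"
    and A E :: "nat \<Rightarrow> 'y set"
    and I J :: nat
    and \<alpha> :: real
    and Psi :: "('d \<Rightarrow> real) \<Rightarrow> ('d \<Rightarrow> real) \<Rightarrow> ennreal"
    and \<gamma>s :: "'y list pmf"
  assumes nb_sym: "\<forall>y y'. nb y y' \<longrightarrow> nb y' y"
    and dens: "\<forall>y. b y \<in> borel_measurable lborel \<and> (\<forall>z. 0 \<le> b y z) \<and>
                   (\<integral>\<^sup>+ z. ennreal (b y z) \<partial>lborel) = 1"
    and x_in: "x \<in> X" and x'_in: "x' \<in> X"
    and A_disj: "\<forall>i < I. \<forall>i' < I. i \<noteq> i' \<longrightarrow> A i \<inter> A i' = {}"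
    and A_cover: "(\<Union>i < I. A i) = UNIV"
    and E_disj: "\<forall>j < J. \<forall>j' < J. j \<noteq> j' \<longrightarrow> E j \<inter> E j' = {}"
    and E_cover: "(\<Union>j < J. E j) = UNIV"
    and A_pos: "\<forall>i < I. measure_pmf.prob (S x) (A i) > 0"
    and E_pos: "\<forall>j < J. measure_pmf.prob (S x') (E j) > 0"
    and alpha: "\<alpha> > 1"
    and Psi_def: "Psi = H_div \<alpha> \<or> Psi = L_div \<alpha>"
    and coup: "is_coupling (map (\<lambda>i. cond_pmf (S x) (A i)) [0..<I] @ map (\<lambda>j. cond_pmf (S x') (E j)) [0..<J]) \<gamma>s"
    and compat: "dY_compatible nb (map (\<lambda>i. cond_pmf (S x) (A i)) [0..<I] @ map (\<lambda>j. cond_pmf (S x') (E j)) [0..<J]) \<gamma>s"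
  shows "is_arg_min
           (\<lambda>\<gamma>. \<Sum>ys \<in> {ys :: 'y list. length ys = I + J}.
                  cost_hat Psi b nb I J (\<lambda>i. measure_pmf.prob (S x) (A i)) (\<lambda>j. measure_pmf.prob (S x') (E j)) ys
                  * ennreal (pmf \<gamma> ys))
           (is_coupling (map (\<lambda>i. cond_pmf (S x) (A i)) [0..<I] @ map (\<lambda>j. cond_pmf (S x') (E j)) [0..<J]))
           \<gamma>s"
proof -
  define ps where "ps = map (\<lambda>i. cond_pmf (S x) (A i)) [0..<I] @ map (\<lambda>j. cond_pmf (S x') (E j)) [0..<J]"
  define C where "C = cost_hat Psi b nb I J (\<lambda>i. measure_pmf.prob (S x) (A i)) (\<lambda>j. measure_pmf.prob (S x') (E j))"
  define L where "L = {ys :: 'y list. length ys = I + J}"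
  have finL: "finite L" unfolding L_def by (rule finite_len)
  have lenps: "length ps = I + J" unfolding ps_def by simp
  have Ipos: "0 < I"
  proof (rule ccontr)
    assume "\<not> 0 < I" then have "I = 0" by simp
    then show False using A_cover by simp
  qed
  have marg: "\<And>\<gamma> ys. is_coupling ps \<gamma> \<Longrightarrow> ys \<in> set_pmf \<gamma> \<Longrightarrow>
      length ys = I + J \<and> (\<forall>k < length ps. ys ! k \<in> set_pmf (ps ! k))"
  proof -
    fix \<gamma> ys assume c: "is_coupling ps \<gamma>" and ys: "ys \<in> set_pmf \<gamma>"
    have "\<forall>k < length ps. ys ! k \<in> set_pmf (ps ! k)"
    proof (intro allI impI)
      fix k assume "k < length ps"
      then have "map_pmf (\<lambda>ys. ys ! k) \<gamma> = ps ! k" using c unfolding is_coupling_def by auto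
      then show "ys ! k \<in> set_pmf (ps ! k)" using ys by (metis image_eqI set_map_pmf)
    qed
    then show "length ys = I + J \<and> (\<forall>k < length ps. ys ! k \<in> set_pmf (ps ! k))"
      using c ys lenps unfolding is_coupling_def by auto
  qed
  have coup': "is_coupling ps \<gamma>s" using coup unfolding ps_def .
  have compat': "dY_compatible nb ps \<gamma>s" using compat unfolding ps_def .
  have mono: "C z \<le> C ys" if z: "z \<in> set_pmf \<gamma>s" and len: "length ys = I + J"
      and ysk: "\<forall>k < length ps. ys ! k \<in> set_pmf (ps ! k)" and z0: "z ! 0 = ys ! 0" for z ys
    unfolding C_def
  proof (rule cost_hat_mono)
    show "length z = I + J" using marg[OF coup' z] by simp
    show "\<forall>k<I + J. \<forall>l<I + J. ydist nb (z ! k) (z ! l) \<le> ydist nb (ys ! k) (ys ! l)"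
    proof (intro allI impI)
      fix k l assume "k < I + J" "l < I + J"
      then show "ydist nb (z ! k) (z ! l) \<le> ydist nb (ys ! k) (ys ! l)"
        using key_dist[OF nb_sym compat' z ysk z0] lenps by simp
    qed
  qed
  define g where "g y0 = C (SOME z. z \<in> set_pmf \<gamma>s \<and> z ! 0 = y0)" for y0
  have geq: "C ys = g (ys ! 0)" if ys: "ys \<in> set_pmf \<gamma>s" for ys
  proof -
    have ex: "\<exists>z. z \<in> set_pmf \<gamma>s \<and> z ! 0 = ys ! 0" using ys by blast
    define z where "z = (SOME z. z \<in> set_pmf \<gamma>s \<and> z ! 0 = ys ! 0)"
    have z: "z \<in> set_pmf \<gamma>s" "z ! 0 = ys ! 0" using someI_ex[OF ex] unfolding z_def by auto
    have "C z \<le> C ys" using marg[OF coup' ys] z(2) by (intro mono[OF z(1)]) simp_all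
    moreover have "C ys \<le> C z" using marg[OF coup' z(1)] z(2) by (intro mono[OF ys]) simp_all
    ultimately show ?thesis unfolding g_def z_def[symmetric] by simp
  qed
  have gle: "g (ys ! 0) \<le> C ys" if c: "is_coupling ps \<gamma>" and ys: "ys \<in> set_pmf \<gamma>" for \<gamma> ys
  proof -
    have m0: "map_pmf (\<lambda>ys. ys ! 0) \<gamma> = ps ! 0" "map_pmf (\<lambda>ys. ys ! 0) \<gamma>s = ps ! 0"
      using c coup' Ipos lenps unfolding is_coupling_def by auto
    have "ys ! 0 \<in> set_pmf (ps ! 0)" using ys m0(1) by (metis image_eqI set_map_pmf)
    then have ex: "\<exists>z. z \<in> set_pmf \<gamma>s \<and> z ! 0 = ys ! 0" using m0(2) by (metis imageE set_map_pmf)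
    define z where "z = (SOME z. z \<in> set_pmf \<gamma>s \<and> z ! 0 = ys ! 0)"
    have z: "z \<in> set_pmf \<gamma>s" "z ! 0 = ys ! 0" using someI_ex[OF ex] unfolding z_def by auto
    have "C z \<le> C ys" using marg[OF c ys] z(2) by (intro mono[OF z(1)]) simp_all
    then show ?thesis unfolding g_def z_def[symmetric] .
  qed
  have sumint: "(\<Sum>ys \<in> L. C ys * ennreal (pmf \<gamma> ys)) = (\<integral>\<^sup>+ys. C ys \<partial>measure_pmf \<gamma>)"
    if c: "is_coupling ps \<gamma>" for \<gamma>
    using marg[OF c] by (intro nn_integral_measure_pmf_support[symmetric] finL) (auto simp: L_def)
  have int0: "(\<integral>\<^sup>+ys. g (ys ! 0) \<partial>measure_pmf \<gamma>) = (\<integral>\<^sup>+y. g y \<partial>measure_pmf (ps ! 0))"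
    if c: "is_coupling ps \<gamma>" for \<gamma>
  proof -
    have "map_pmf (\<lambda>ys. ys ! 0) \<gamma> = ps ! 0"
      using c Ipos lenps unfolding is_coupling_def by auto
    then show ?thesis by (metis nn_integral_map_pmf)
  qed
  have ineq: "(\<integral>\<^sup>+ys. C ys \<partial>measure_pmf \<gamma>s) \<le> (\<integral>\<^sup>+ys. C ys \<partial>measure_pmf \<gamma>)"
    if c: "is_coupling ps \<gamma>" for \<gamma>
  proof -
    have "(\<integral>\<^sup>+ys. C ys \<partial>measure_pmf \<gamma>s) = (\<integral>\<^sup>+ys. g (ys ! 0) \<partial>measure_pmf \<gamma>s)"
      using geq by (intro nn_integral_cong_AE) (auto simp: AE_measure_pmf_iff)
    also have "\<dots> = (\<integral>\<^sup>+ys. g (ys ! 0) \<partial>measure_pmf \<gamma>)"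
      using int0[OF coup'] int0[OF c] by simp
    also have "\<dots> \<le> (\<integral>\<^sup>+ys. C ys \<partial>measure_pmf \<gamma>)"
      using gle[OF c] by (intro nn_integral_mono_AE) (auto simp: AE_measure_pmf_iff)
    finally show ?thesis .
  qed
  show ?thesis
    unfolding is_arg_min_def ps_def[symmetric] C_def[symmetric] L_def[symmetric]
  proof (intro conjI notI)
    show "is_coupling ps \<gamma>s" by (rule coup')
    assume "\<exists>\<gamma>. is_coupling ps \<gamma> \<and> (\<Sum>ys\<in>L. C ys * ennreal (pmf \<gamma> ys)) < (\<Sum>ys\<in>L. C ys * ennreal (pmf \<gamma>s ys))"
    then obtain \<gamma> where c: "is_coupling ps \<gamma>"
      and lt: "(\<Sum>ys\<in>L. C ys * ennreal (pmf \<gamma> ys)) < (\<Sum>ys\<in>L. C ys * ennreal (pmf \<gamma>s ys))" by blast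
    have "(\<Sum>ys\<in>L. C ys * ennreal (pmf \<gamma>s ys)) \<le> (\<Sum>ys\<in>L. C ys * ennreal (pmf \<gamma> ys))"
      unfolding sumint[OF c] sumint[OF coup'] by (rule ineq[OF c])
    then show False using lt by simp
  qed
qed

end
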